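(* Let $\mathbb{F}\in\{\mathbb{R},\mathbb{C}\}$, let $\nu$ be a vector norm on $\mathbb{F}^n$, and let $A\in\mathbb{F}^{n\times n}$ be nonexpansive with respect to $\nu$. Let $H=\mathcal{R}(I-A)$ and $K=\mathcal{N}(I-A)$. Suppose that $\nu(y+z)=\nu(y)+\nu(z)$ for all $y\in H$, $z\in K$. Then the following are equivalent: (i) $A$ is $l$-paracontracting with respect to $\nu$; (ii) $A$ is paracontracting with respect to $\nu$; (iii) $A$ is an $H$-contractor with respect to $\nu$.
   Context: $\mathcal{R}$ denotes range and $\mathcal{N}$ denotes nullspace. The operator norm is $\nu^0(A)=\sup_{x\neq 0}\nu(Ax)/\nu(x)$; $A$ is nonexpansive with respect to $\nu$ if $\nu^0(A)\le 1$. For a subspace $H$ invariant under $A$, $\nu^0_H(A)=\sup_{0\neq x\in H}\nu(Ax)/\nu(x)$. $A$ is paracontracting with respect to $\nu$ if $\nu(Ax)<\nu(x)$ whenever $Ax\ne x$. $A$ is $l$-paracontracting with respect to $\nu$ if there is $\gamma>0$ such that $\nu(Ax)\le \nu(x)-\gamma\,\nu(Ax-x)$ for all $x\in\mathbb{F}^n$. $A$ is an $H$-contractor with respect to $\nu$ if $A$ is nonexpansive, $H$ is invariant under $A$, and $\nu^0_H(A)<1$. *)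

theory Defs
  imports "HOL-Analysis.Analysis"
begin

definition is_vnorm :: "('f::real_normed_field ^ 'n \<Rightarrow> real) \<Rightarrow> bool" where
  "is_vnorm \<nu> \<longleftrightarrow>
     (\<forall>x. 0 \<le> \<nu> x) \<and> (\<forall>x. \<nu> x = 0 \<longleftrightarrow> x = 0) \<and>
     (\<forall>c x. \<nu> (c *s x) = norm c * \<nu> x) \<and>
     (\<forall>x y. \<nu> (x + y) \<le> \<nu> x + \<nu> y)"

text \<open>Operator norm induced by \<nu>, restricted to a subspace H (H = UNIV gives \<nu>^0).\<close>
definition op_norm_on :: "('f::real_normed_field ^ 'n \<Rightarrow> real) \<Rightarrow> (('f ^ 'n) set) \<Rightarrow> ('f ^ 'n ^ 'n) \<Rightarrow> real" where
  "op_norm_on \<nu> H A = (if H \<subseteq> {0} then 0 else (SUP x\<in>H - {0}. \<nu> (A *v x) / \<nu> x))"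

abbreviation op_norm :: "('f::real_normed_field ^ 'n \<Rightarrow> real) \<Rightarrow> ('f ^ 'n ^ 'n) \<Rightarrow> real" where
  "op_norm \<nu> A \<equiv> op_norm_on \<nu> UNIV A"

definition nonexpansive :: "('f::real_normed_field ^ 'n \<Rightarrow> real) \<Rightarrow> ('f ^ 'n ^ 'n) \<Rightarrow> bool" where
  "nonexpansive \<nu> A \<longleftrightarrow> op_norm \<nu> A \<le> 1"

definition paracontracting :: "('f::real_normed_field ^ 'n \<Rightarrow> real) \<Rightarrow> ('f ^ 'n ^ 'n) \<Rightarrow> bool" where
  "paracontracting \<nu> A \<longleftrightarrow> (\<forall>x. A *v x \<noteq> x \<longrightarrow> \<nu> (A *v x) < \<nu> x)"

definition l_paracontracting :: "('f::real_normed_field ^ 'n \<Rightarrow> real) \<Rightarrow> ('f ^ 'n ^ 'n) \<Rightarrow> bool" where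
  "l_paracontracting \<nu> A \<longleftrightarrow>
     (\<exists>\<gamma>>0. \<forall>x. \<nu> (A *v x) \<le> \<nu> x - \<gamma> * \<nu> (A *v x - x))"

definition H_contractor :: "('f::real_normed_field ^ 'n \<Rightarrow> real) \<Rightarrow> (('f ^ 'n) set) \<Rightarrow> ('f ^ 'n ^ 'n) \<Rightarrow> bool" where
  "H_contractor \<nu> H A \<longleftrightarrow>
     nonexpansive \<nu> A \<and> (\<forall>x\<in>H. A *v x \<in> H) \<and> op_norm_on \<nu> H A < 1"

definition range_IA :: "('f::real_normed_field ^ 'n ^ 'n) \<Rightarrow> ('f ^ 'n) set" where
  "range_IA A = range (\<lambda>x. x - A *v x)"

definition null_IA :: "('f::real_normed_field ^ 'n ^ 'n) \<Rightarrow> ('f ^ 'n) set" where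
  "null_IA A = {x. x - A *v x = 0}"

end

theory Submission
  imports Defs
begin

lemma main:
  fixes \<nu> :: "'f::{real_normed_field,euclidean_space} ^ 'n \<Rightarrow> real" and A :: "'f ^ 'n ^ 'n"
  assumes nv: "is_vnorm \<nu>" and ne: "nonexpansive \<nu> A"
    and add: "\<forall>y\<in>range_IA A. \<forall>z\<in>null_IA A. \<nu> (y + z) = \<nu> y + \<nu> z"
  shows "(l_paracontracting \<nu> A \<longleftrightarrow> paracontracting \<nu> A) \<and>
       (paracontracting \<nu> A \<longleftrightarrow> H_contractor \<nu> (range_IA A) A)"
proof -
  define H where "H = range_IA A"
  define K where "K = null_IA A"
  define P where "P = (\<lambda>x. x - A *v x)"
  have nn: "\<And>x. 0 \<le> \<nu> x" and nz: "\<And>x. \<nu> x = 0 \<longleftrightarrow> x = 0"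
    and hom: "\<And>c x. \<nu> (c *s x) = norm c * \<nu> x" and tri: "\<And>x y. \<nu> (x + y) \<le> \<nu> x + \<nu> y"
    using nv unfolding is_vnorm_def by auto
  have nu0: "\<nu> 0 = 0" using nz by simp
  have sR: "\<nu> (r *\<^sub>R x) = \<bar>r\<bar> * \<nu> x" for r x
  proof -
    have "r *\<^sub>R x = (of_real r :: 'f) *s x"
      by (simp add: vec_eq_iff of_real_def)
    then show ?thesis using hom[of "of_real r" x] by simp
  qed
  have neg: "\<nu> (- x) = \<nu> x" for x
    using sR[of "-1" x] by simp
  have linA: "linear ((*v) A)"
    by (simp add: bounded_linear.linear)
  have AsR: "A *v (r *\<^sub>R x) = r *\<^sub>R (A *v x)" for r x
    using linA by (simp add: linear_scale)
  have conv: "convex_on UNIV \<nu>"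
  proof (rule convex_onI)
    fix x y :: "'f ^ 'n" and t :: real assume t: "0 < t" "t < 1"
    have "\<nu> ((1 - t) *\<^sub>R x + t *\<^sub>R y) \<le> \<nu> ((1 - t) *\<^sub>R x) + \<nu> (t *\<^sub>R y)" by (rule tri)
    also have "\<dots> = (1 - t) * \<nu> x + t * \<nu> y" using t by (simp add: sR)
    finally show "\<nu> ((1 - t) *\<^sub>R x + t *\<^sub>R y) \<le> (1 - t) * \<nu> x + t * \<nu> y" .
  qed simp
  have cont: "continuous_on S \<nu>" for S
    using convex_on_continuous[OF open_UNIV conv] continuous_on_subset by blast
  obtain b :: "'f ^ 'n" where b: "norm b = 1"
    using norm_Basis[OF SOME_Basis] by blast
  have sph: "compact (sphere (0::'f^'n) 1)" "sphere (0::'f^'n) 1 \<noteq> {}"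
    using b by auto
  obtain x0 where x0: "x0 \<in> sphere 0 1" "\<And>y. y \<in> sphere 0 1 \<Longrightarrow> \<nu> x0 \<le> \<nu> y"
    using continuous_attains_inf[OF sph cont] by blast
  define c where "c = \<nu> x0"
  have c0: "c > 0" using x0 nn[of x0] nz[of x0] unfolding c_def by force
  have unit: "x = norm x *\<^sub>R ((1 / norm x) *\<^sub>R x)" "(1 / norm x) *\<^sub>R x \<in> sphere 0 1" if "x \<noteq> 0" for x :: "'f^'n"
    using that by auto
  have lower: "c * norm x \<le> \<nu> x" for x
  proof (cases "x = 0")
    case False
    have "\<nu> x = norm x * \<nu> ((1 / norm x) *\<^sub>R x)"
      using sR unit(1)[OF False] by (metis abs_norm_cancel)
    moreover have "c \<le> \<nu> ((1 / norm x) *\<^sub>R x)" using x0(2)[OF unit(2)[OF False]] c_def by simp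
    ultimately show ?thesis by (metis mult.commute mult_right_mono norm_ge_zero)
  qed (simp add: nn nu0)
  obtain x1 where x1: "x1 \<in> sphere 0 1" "\<And>y. y \<in> sphere 0 1 \<Longrightarrow> \<nu> (A *v y) \<le> \<nu> (A *v x1)"
    using continuous_attains_sup[OF sph continuous_on_compose2[OF cont matrix_vector_mult_linear_continuous_on]]
    by blast
  define M where "M = \<nu> (A *v x1) / c"
  have upper: "\<nu> (A *v x) \<le> M * \<nu> x" for x
  proof (cases "x = 0")
    case False
    have "\<nu> (A *v x) = norm x * \<nu> (A *v ((1 / norm x) *\<^sub>R x))"
      using sR unit(1)[OF False] AsR by (metis abs_norm_cancel)
    also have "\<dots> \<le> norm x * \<nu> (A *v x1)" using x1(2)[OF unit(2)[OF False]] by (simp add: mult_left_mono)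
    also have "\<dots> = (c * norm x) * M" using c0 by (simp add: M_def)
    also have "\<dots> \<le> \<nu> x * M" using lower[of x] nn c0 x1 unfolding M_def
      by (intro mult_right_mono) (auto intro!: divide_nonneg_pos)
    finally show ?thesis by (simp add: mult.commute)
  qed (simp add: nn nu0)
  have bdd: "bdd_above ((\<lambda>x. \<nu> (A *v x) / \<nu> x) ` S)" for S
  proof (rule bdd_aboveI2)
    fix x show "\<nu> (A *v x) / \<nu> x \<le> max M 0"
    proof (cases "\<nu> x = 0")
      case False
      then have "\<nu> (A *v x) / \<nu> x \<le> M"
        using upper[of x] nn[of x] by (simp add: divide_le_eq mult.commute)
      then show ?thesis by linarith
    qed simp
  qed
  have opb: "\<nu> (A *v x) \<le> op_norm_on \<nu> S A * \<nu> x" if "x \<in> S" for x S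
  proof (cases "x = 0")
    case False
    then have "\<not> S \<subseteq> {0}" using that by auto
    then have "\<nu> (A *v x) / \<nu> x \<le> op_norm_on \<nu> S A"
      unfolding op_norm_on_def using that False by (simp only: if_False) (rule cSUP_upper[OF _ bdd], simp)
    then show ?thesis using False nz[of x] nn[of x] by (simp add: divide_le_eq)
  qed (simp add: nn nu0)
  have nexp: "\<nu> (A *v x) \<le> \<nu> x" for x
  proof -
    have "op_norm \<nu> A * \<nu> x \<le> 1 * \<nu> x"
      using ne nn[of x] unfolding nonexpansive_def by (intro mult_right_mono) auto
    then show ?thesis using opb[of x UNIV] by simp
  qed
  have linP: "linear P" unfolding P_def
    by (simp add: linear_compose_sub module_hom_ident linA)
  have Hr: "H = range P" unfolding H_def P_def range_IA_def by simp
  have Kn: "K = {x. P x = 0}" unfolding K_def P_def null_IA_def by simp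
  have subH: "subspace H" unfolding Hr using linP subspace_UNIV linear_subspace_image by blast
  have subK: "subspace K" unfolding Kn using linP by (simp add: linear_subspace_kernel)
  have PA: "P (A *v x) = A *v (P x)" for x unfolding P_def by (simp add: algebra_simps)
  have inv: "\<forall>x\<in>H. A *v x \<in> H"
  proof
    fix x assume "x \<in> H"
    then obtain u where "x = P u" unfolding Hr by auto
    then have "A *v x = P (A *v u)" using PA[of u] by simp
    then show "A *v x \<in> H" unfolding Hr by simp
  qed
  have addHK: "\<nu> (y + z) = \<nu> y + \<nu> z" if "y \<in> H" "z \<in> K" for y z
    using add that H_def K_def by blast
  have HK: "y = 0" if "y \<in> H" "y \<in> K" for y
  proof -
    have "- y \<in> K" using subK that subspace_neg by blast
    then have "\<nu> (y + - y) = \<nu> y + \<nu> (- y)" using addHK that by blast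
    then have "\<nu> y = 0" using neg[of y] nz[of 0] by simp
    then show ?thesis using nz by simp
  qed
  have injP: "inj_on P (span H)"
    unfolding span_eq_iff[THEN iffD2, OF subH]
  proof (rule inj_onI)
    fix u v assume uv: "u \<in> H" "v \<in> H" "P u = P v"
    have "u - v \<in> H" using subH uv subspace_diff by blast
    moreover have "u - v \<in> K" using uv linear_diff[OF linP] Kn by simp
    ultimately show "u = v" using HK by fastforce
  qed
  have PH: "P ` H = H"
  proof (rule subspace_dim_equal)
    show "subspace (P ` H)" using subH linP linear_subspace_image by blast
    show "P ` H \<subseteq> H" unfolding Hr by auto
    show "dim H \<le> dim (P ` H)" using dim_image_eq[OF linP injP] by simp
  qed (rule subH)
  have dec: "\<exists>y\<in>H. \<exists>z\<in>K. x = y + z" for x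
  proof -
    have "P x \<in> H" unfolding Hr by simp
    then have "P x \<in> P ` H" using PH by simp
    then obtain y where y: "y \<in> H" "P x = P y" by auto
    have "x - y \<in> K" using y linear_diff[OF linP] Kn by simp
    then show ?thesis using y(1) by (metis add.commute diff_add_cancel)
  qed
  have i_ii: "paracontracting \<nu> A" if lp: "l_paracontracting \<nu> A"
  proof -
    obtain g where g: "g > 0" "\<And>x. \<nu> (A *v x) \<le> \<nu> x - g * \<nu> (A *v x - x)"
      using lp unfolding l_paracontracting_def by blast
    show ?thesis unfolding paracontracting_def
    proof (intro allI impI)
      fix x assume "A *v x \<noteq> x"
      then have "\<nu> (A *v x - x) > 0" using nz nn by (metis eq_iff_diff_eq_0 order_le_less)
      then have "g * \<nu> (A *v x - x) > 0" using g(1) by simp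
      then show "\<nu> (A *v x) < \<nu> x" using g(2)[of x] by linarith
    qed
  qed
  have iii_i: "l_paracontracting \<nu> A" if "H_contractor \<nu> H A"
  proof -
    define q where "q = max (op_norm_on \<nu> H A) 0"
    have q: "q < 1" "0 \<le> q" using that unfolding H_contractor_def q_def by auto
    have qb: "\<nu> (A *v y) \<le> q * \<nu> y" if "y \<in> H" for y
    proof -
      have "op_norm_on \<nu> H A * \<nu> y \<le> q * \<nu> y"
        using nn[of y] unfolding q_def by (intro mult_right_mono) auto
      then show ?thesis using opb[OF that] by linarith
    qed
    define g where "g = (1 - q) / 2"
    show ?thesis unfolding l_paracontracting_def
    proof (intro exI[of _ g] conjI allI)
      show "g > 0" using q g_def by simp
      fix x
      obtain y z where yz: "y \<in> H" "z \<in> K" "x = y + z" using dec by blast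
      have Az: "A *v z = z" using yz(2) Kn P_def by simp
      have Ax: "A *v x = A *v y + z" using yz Az by (simp add: matrix_vector_right_distrib)
      have e1: "\<nu> (A *v x) = \<nu> (A *v y) + \<nu> z" using Ax addHK inv yz by simp
      have e2: "\<nu> x = \<nu> y + \<nu> z" using addHK yz by simp
      have e3: "\<nu> (A *v x - x) \<le> \<nu> (A *v y) + \<nu> y"
        using Ax yz tri[of "A *v y" "- y"] neg[of y] by simp
      have Ay: "\<nu> (A *v y) \<le> q * \<nu> y" using qb yz by simp
      have "g * \<nu> (A *v x - x) \<le> g * (q * \<nu> y + \<nu> y)"
        using e3 Ay q g_def by (intro mult_left_mono) auto
      moreover have "g * (q * \<nu> y + \<nu> y) + q * \<nu> y \<le> \<nu> y"
      proof -
        have "g * (q * \<nu> y + \<nu> y) + q * \<nu> y = ((1 + q) / 2 * (1 - q) + q) * \<nu> y"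
          by (simp add: g_def algebra_simps)
        also have "\<dots> \<le> 1 * \<nu> y"
        proof (rule mult_right_mono)
          show "(1 + q) / 2 * (1 - q) + q \<le> 1" 
          proof -
            have "(1 + q) / 2 * (1 - q) + q = 1 - (1 - q) * (1 - q) / 2" by (simp add: field_simps)
            moreover have "0 \<le> (1 - q) * (1 - q)" by simp
            ultimately show ?thesis by linarith
          qed
        qed (rule nn)
        finally show ?thesis by simp
      qed
      ultimately show "\<nu> (A *v x) \<le> \<nu> x - g * \<nu> (A *v x - x)"
        using e1 e2 Ay by linarith
    qed
  qed
  have ii_iii: "H_contractor \<nu> H A" if pc: "paracontracting \<nu> A"
  proof -
    have "op_norm_on \<nu> H A < 1"
    proof (cases "H \<subseteq> {0}")
      case True then show ?thesis unfolding op_norm_on_def by simp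
    next
      case False
      then obtain y0 where y0: "y0 \<in> H" "y0 \<noteq> 0" by auto
      define S where "S = sphere 0 1 \<inter> H"
      have cS: "compact S" unfolding S_def
        using compact_Int_closed[OF sph(1) closed_subspace[OF subH]] .
      have uH: "(1 / norm y) *\<^sub>R y \<in> S" if "y \<in> H" "y \<noteq> 0" for y
        using unit(2)[OF that(2)] subspace_scale[OF subH that(1)] unfolding S_def by blast
      have neS: "S \<noteq> {}" using uH[OF y0] by blast
      have Snz: "\<forall>x\<in>S. \<nu> x \<noteq> 0"
      proof
        fix x assume "x \<in> S"
        then have "norm x = 1" unfolding S_def by simp
        then have "x \<noteq> 0" by auto
        then show "\<nu> x \<noteq> 0" using nz[of x] by simp
      qed
      have c1: "continuous_on S (\<lambda>x. \<nu> (A *v x))"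
        by (rule continuous_on_compose2[OF cont matrix_vector_mult_linear_continuous_on subset_UNIV])
      have cf: "continuous_on S (\<lambda>x. \<nu> (A *v x) / \<nu> x)"
        by (rule continuous_on_divide[OF c1 cont Snz])
      obtain x2 where x2: "x2 \<in> S" "\<And>y. y \<in> S \<Longrightarrow> \<nu> (A *v y) / \<nu> y \<le> \<nu> (A *v x2) / \<nu> x2"
        using continuous_attains_sup[OF cS neS cf] by blast
      have x2H: "x2 \<in> H" "x2 \<noteq> 0" using x2(1) unfolding S_def by auto
      have "A *v x2 \<noteq> x2"
      proof
        assume "A *v x2 = x2"
        then have "x2 \<in> K" unfolding Kn P_def by simp
        then show False using HK x2H by blast
      qed
      then have "\<nu> (A *v x2) < \<nu> x2" using pc unfolding paracontracting_def by blast
      then have m1: "\<nu> (A *v x2) / \<nu> x2 < 1" using nn[of x2] by (simp add: divide_less_eq)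
      have "op_norm_on \<nu> H A \<le> \<nu> (A *v x2) / \<nu> x2"
        unfolding op_norm_on_def using False
      proof (simp, intro cSUP_least)
        show "H - {0} \<noteq> {}" using y0 by blast
        fix y assume y: "y \<in> H - {0}"
        have "\<nu> (A *v y) / \<nu> y = \<nu> (A *v ((1 / norm y) *\<^sub>R y)) / \<nu> ((1 / norm y) *\<^sub>R y)"
          using y by (simp add: AsR sR)
        also have "\<dots> \<le> \<nu> (A *v x2) / \<nu> x2" using x2(2) uH y by blast
        finally show "\<nu> (A *v y) / \<nu> y \<le> \<nu> (A *v x2) / \<nu> x2" .
      qed
      then show ?thesis using m1 by linarith
    qed
    then show ?thesis unfolding H_contractor_def using ne inv by blast
  qed
  show ?thesis using i_ii iii_i ii_iii unfolding H_def[symmetric] by blast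
qed

theorem theorem2p7:
  "(\<forall>(\<nu> :: real ^ 'n \<Rightarrow> real) (A :: real ^ 'n ^ 'n).
      is_vnorm \<nu> \<longrightarrow> nonexpansive \<nu> A \<longrightarrow>
      (\<forall>y\<in>range_IA A. \<forall>z\<in>null_IA A. \<nu> (y + z) = \<nu> y + \<nu> z) \<longrightarrow>
      ((l_paracontracting \<nu> A \<longleftrightarrow> paracontracting \<nu> A) \<and>
       (paracontracting \<nu> A \<longleftrightarrow> H_contractor \<nu> (range_IA A) A)))
   \<and>
   (\<forall>(\<nu> :: complex ^ 'n \<Rightarrow> real) (A :: complex ^ 'n ^ 'n).
      is_vnorm \<nu> \<longrightarrow> nonexpansive \<nu> A \<longrightarrow>
      (\<forall>y\<in>range_IA A. \<forall>z\<in>null_IA A. \<nu> (y + z) = \<nu> y + \<nu> z) \<longrightarrow>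
      ((l_paracontracting \<nu> A \<longleftrightarrow> paracontracting \<nu> A) \<and>
       (paracontracting \<nu> A \<longleftrightarrow> H_contractor \<nu> (range_IA A) A)))"
    by (rule conjI; intro allI impI; rule main; assumption)

end
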